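(* Let $P\in\mathbb{R}_+^{n\times n}$ be sub-stochastic, $w\in\mathbb{R}^n_+$, $c\in\mathbb{R}^n$, and let $\mathcal X=\{x\in\mathbb{R}^n:\,x=S_0^w(P'x+c)\}$. For $x\in\mathcal X$ define the partition $\mathcal V=\{1,\dots,n\}=\mathcal V^x_-\cup\mathcal V^x_0\cup\mathcal V^x_+$ by $\mathcal V^x_+=\{i:\,c_i+\sum_{k}P_{ki}x_k>w_i\}$, $\mathcal V^x_0=\{i:\,0\le c_i+\sum_kP_{ki}x_k\le w_i\}$, $\mathcal V^x_-=\{i:\,c_i+\sum_kP_{ki}x_k<0\}$. Then this partition is the same for all equilibria $x\in\mathcal X$.
   Context: $P$ sub-stochastic means $P$ nonnegative with $P\mathbbm{1}\le\mathbbm{1}$ (stochastic matrices included). $(S_0^w(x))_i=\min\{\max\{x_i,0\},w_i\}$; $P'$ is the transpose. *)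

theory Defs
  imports "HOL-Analysis.Analysis"
begin

definition substochastic :: "real^'n^'n \<Rightarrow> bool" where
  "substochastic P \<longleftrightarrow> (\<forall>i j. P $ i $ j \<ge> 0) \<and> (\<forall>i. (\<Sum>j\<in>UNIV. P $ i $ j) \<le> 1)"

definition sat0 :: "real^'n \<Rightarrow> real^'n \<Rightarrow> real^'n" where
  "sat0 w x = (\<chi> i. min (max (x $ i) 0) (w $ i))"

definition inp :: "real^'n^'n \<Rightarrow> real^'n \<Rightarrow> real^'n \<Rightarrow> 'n \<Rightarrow> real" where
  "inp P c x i = c $ i + (\<Sum>k\<in>UNIV. P $ k $ i * x $ k)"

definition equilibria :: "real^'n^'n \<Rightarrow> real^'n \<Rightarrow> real^'n \<Rightarrow> (real^'n) set" where
  "equilibria P w c = {x. x = sat0 w (transpose P *v x + c)}"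

definition Vplus where "Vplus P w c x = {i. inp P c x i > w $ i}"
definition Vzero where "Vzero P w c x = {i. 0 \<le> inp P c x i \<and> inp P c x i \<le> w $ i}"
definition Vminus where "Vminus P w c x = {i. inp P c x i < 0}"

end

theory Submission
  imports Defs
begin

lemma clamp_eq:
  fixes a b w :: real
  assumes "w \<ge> 0" "\<bar>min (max a 0) w - min (max b 0) w\<bar> \<ge> \<bar>a - b\<bar>"
  shows "(a < 0 \<longleftrightarrow> b < 0) \<and> (a > w \<longleftrightarrow> b > w)"
  using assms by (auto simp: min_def max_def split: if_splits)

lemma eq_comp:
  assumes "x \<in> equilibria P w c"
  shows "x $ i = min (max (inp P c x i) 0) (w $ i)"
proof -
  have "x = sat0 w (transpose P *v x + c)" using assms by (simp add: equilibria_def)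
  then have "x $ i = sat0 w (transpose P *v x + c) $ i" by simp
  also have "\<dots> = min (max (inp P c x i) 0) (w $ i)"
    by (simp add: sat0_def inp_def matrix_vector_mult_def transpose_def add.commute)
  finally show ?thesis .
qed

theorem proposition2:
  fixes P :: "real^'n^'n" and w c :: "real^'n"
  assumes "substochastic P"
    and "\<forall>i. w $ i \<ge> 0"
    and "x \<in> equilibria P w c" and "y \<in> equilibria P w c"
  shows "Vminus P w c x = Vminus P w c y \<and> Vzero P w c x = Vzero P w c y
         \<and> Vplus P w c x = Vplus P w c y"
proof -
  define d where "d k = \<bar>x $ k - y $ k\<bar>" for k
  define e where "e i = (\<Sum>k\<in>UNIV. P $ k $ i * d k)" for i
  have Pnn: "\<And>i j. P $ i $ j \<ge> 0" and Prow: "\<And>i. (\<Sum>j\<in>UNIV. P $ i $ j) \<le> 1"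
    using assms(1) by (auto simp: substochastic_def)
  have diff: "inp P c x i - inp P c y i = (\<Sum>k\<in>UNIV. P $ k $ i * (x $ k - y $ k))" for i
    by (simp add: inp_def algebra_simps sum_subtractf)
  have le1: "d i \<le> \<bar>inp P c x i - inp P c y i\<bar>" for i
    unfolding d_def eq_comp[OF assms(3), of i] eq_comp[OF assms(4), of i]
    by (auto simp: min_def max_def)
  have le2: "\<bar>inp P c x i - inp P c y i\<bar> \<le> e i" for i
  proof -
    have "\<bar>inp P c x i - inp P c y i\<bar> \<le> (\<Sum>k\<in>UNIV. \<bar>P $ k $ i * (x $ k - y $ k)\<bar>)"
      unfolding diff by (rule sum_abs)
    also have "\<dots> = e i" unfolding e_def d_def using Pnn by (simp add: abs_mult)
    finally show ?thesis .
  qed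
  have "(\<Sum>i\<in>UNIV. e i) = (\<Sum>k\<in>UNIV. d k * (\<Sum>i\<in>UNIV. P $ k $ i))"
    unfolding e_def by (subst sum.swap) (simp add: sum_distrib_left mult.commute)
  also have "\<dots> \<le> (\<Sum>k\<in>UNIV. d k)"
    by (rule sum_mono) (use Prow in \<open>auto simp: d_def intro: mult_left_le\<close>)
  finally have S: "(\<Sum>i\<in>UNIV. e i - d i) \<le> 0" by (simp add: sum_subtractf)
  have nn: "\<forall>i\<in>UNIV. e i - d i \<ge> 0" using le1 le2 by (meson diff_ge_0_iff_ge order_trans)
  have "0 \<le> (\<Sum>i\<in>UNIV. e i - d i)" using nn by (simp add: sum_nonneg)
  then have "(\<Sum>i\<in>UNIV. e i - d i) = 0" using S by linarith
  then have "\<forall>i\<in>UNIV. e i - d i = 0" using nn by (simp add: sum_nonneg_eq_0_iff)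
  then have eq: "\<bar>inp P c x i - inp P c y i\<bar> \<le> d i" for i using le2[of i] by auto
  have key: "(inp P c x i < 0 \<longleftrightarrow> inp P c y i < 0) \<and> (inp P c x i > w $ i \<longleftrightarrow> inp P c y i > w $ i)" for i
    apply (rule clamp_eq)
    using assms(2) apply simp
    using eq[of i] unfolding d_def eq_comp[OF assms(3), of i] eq_comp[OF assms(4), of i] .
  show ?thesis
    unfolding Vminus_def Vzero_def Vplus_def using key by (auto simp: not_less[symmetric])
qed

end
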